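(* If $(\mathbb N,U)$ is a universal tournament, then there exists a sequence $X_1,X_2,\dots$ of independent continuous random variables on $[0,1]$ with $E(X_i)=\tfrac12$ for all $i$, such that $P(X_i>X_j)>\tfrac12$ if and only if $i\to j$ in $U$.
   Context: A continuous random variable on $[0,1]$ is one whose distribution function is continuous and strictly increasing on $[0,1]$ with value $0$ at $0$ and $1$ at $1$. A tournament $(T,U)$ ($U\subset T\times T$ with no diagonal pairs and exactly one of $(i,j),(j,i)$ for each distinct $i,j$; $i\to j$ means $(i,j)\in U$) is universal if for every tournament $R$ on a countable set $S$, every finite $S_0\subset S$ and every embedding $\phi:R\cap(S_0\times S_0)\to U$ (an injective map with $i\to j$ iff $\phi(i)\to\phi(j)$), there is an embedding $\psi:R\to U$ extending $\phi$. *)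

theory Defs
  imports "HOL-Probability.Probability"
begin

definition tournament :: "'a set \<Rightarrow> ('a \<times> 'a) set \<Rightarrow> bool" where
  "tournament T U \<longleftrightarrow> U \<subseteq> T \<times> T \<and> (\<forall>i\<in>T. (i, i) \<notin> U) \<and>
     (\<forall>i\<in>T. \<forall>j\<in>T. i \<noteq> j \<longrightarrow> ((i, j) \<in> U \<longleftrightarrow> (j, i) \<notin> U))"

definition tourn_embedding ::
  "'a set \<Rightarrow> ('a \<times> 'a) set \<Rightarrow> ('a \<Rightarrow> 'b) \<Rightarrow> 'b set \<Rightarrow> ('b \<times> 'b) set \<Rightarrow> bool" where
  "tourn_embedding A R f T U \<longleftrightarrow> f ` A \<subseteq> T \<and> inj_on f A \<and>
     (\<forall>i\<in>A. \<forall>j\<in>A. (i, j) \<in> R \<longleftrightarrow> (f i, f j) \<in> U)"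

text \<open>Universality; countable vertex sets are represented as subsets of nat
  (every countable set is in bijection with such a set).\<close>
definition universal_tournament :: "'b set \<Rightarrow> ('b \<times> 'b) set \<Rightarrow> bool" where
  "universal_tournament T U \<longleftrightarrow> tournament T U \<and>
     (\<forall>(S :: nat set) R S0 \<phi>. tournament S R \<and> finite S0 \<and> S0 \<subseteq> S \<and>
        tourn_embedding S0 R \<phi> T U \<longrightarrow>
        (\<exists>\<psi>. tourn_embedding S R \<psi> T U \<and> (\<forall>i\<in>S0. \<psi> i = \<phi> i)))"

definition distr_fun :: "'a measure \<Rightarrow> ('a \<Rightarrow> real) \<Rightarrow> real \<Rightarrow> real" where
  "distr_fun M X x = measure M {\<omega> \<in> space M. X \<omega> \<le> x}"

definition continuous_rv_01 :: "'a measure \<Rightarrow> ('a \<Rightarrow> real) \<Rightarrow> bool" where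
  "continuous_rv_01 M X \<longleftrightarrow> X \<in> borel_measurable M \<and>
     continuous_on {0..1} (distr_fun M X) \<and> strict_mono_on {0..1} (distr_fun M X) \<and>
     distr_fun M X 0 = 0 \<and> distr_fun M X 1 = 1"

end

theory Submission
  imports Defs
begin

definition tp :: "real \<Rightarrow> real \<Rightarrow> real \<Rightarrow> real" where
  "tp a l x = max 0 (min (x - a) (a + l - x))"

definition tpd :: "real \<Rightarrow> real \<Rightarrow> real \<Rightarrow> real" where
  "tpd a l x = (if a < x \<and> x < a + l/2 then 1 else if a + l/2 < x \<and> x < a + l then -1 else 0)"

definition tpG :: "real \<Rightarrow> real \<Rightarrow> real \<Rightarrow> real" where
  "tpG a l x = (let u = max a (min x (a + l/2)); v = max (a + l/2) (min x (a + l)) in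
     (u - a)^2/2 + ((v - (a + l/2)) * (a + l) - (v^2 - (a + l/2)^2)/2))"

lemma tp_zero: "l > 0 \<Longrightarrow> x \<le> a \<or> a + l \<le> x \<Longrightarrow> tp a l x = 0"
  unfolding tp_def by auto

lemma tp_rise: "a \<le> x \<Longrightarrow> x \<le> a + l/2 \<Longrightarrow> tp a l x = x - a"
  unfolding tp_def by auto

lemma tp_fall: "a + l/2 \<le> x \<Longrightarrow> x \<le> a + l \<Longrightarrow> tp a l x = a + l - x"
  unfolding tp_def by auto

lemma tp_nz: "l > 0 \<Longrightarrow> tp a l x \<noteq> 0 \<Longrightarrow> a < x \<and> x < a + l"
  unfolding tp_def by (auto simp: max_def min_def split: if_splits)

lemma tpd_nz: "tpd a l x \<noteq> 0 \<Longrightarrow> a < x \<and> x < a + l"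
  unfolding tpd_def by (auto split: if_splits)

lemma tpd_bound: "\<bar>tpd a l x\<bar> \<le> 1"
  unfolding tpd_def by auto

lemma tp_cont[continuous_intros]: "continuous_on S (tp a l)"
  unfolding tp_def by (intro continuous_intros)

lemma tpG_cont: "continuous_on S (tpG a l)"
  unfolding tpG_def Let_def by (intro continuous_intros) auto

lemma tpd_meas[measurable]: "tpd a l \<in> borel_measurable borel"
  unfolding tpd_def by measurable

lemma tp_meas[measurable]: "tp a l \<in> borel_measurable borel"
  by (intro borel_measurable_continuous_onI tp_cont)

lemma tp_deriv:
  assumes l: "l > 0" and x: "x \<notin> {a, a + l/2, a + l}"
  shows "(tp a l has_real_derivative tpd a l x) (at x)"
proof -
  consider "x < a" | "a < x \<and> x < a + l/2" | "a + l/2 < x \<and> x < a + l" | "a + l < x"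
    using x l by force
  then show ?thesis
  proof cases
    case 1
    show ?thesis
      apply (rule has_field_derivative_transform_within_open[where f="\<lambda>_. 0" and S="{..<a}"])
      using 1 l by (auto simp: tpd_def tp_def)
  next
    case 2
    show ?thesis
      apply (rule has_field_derivative_transform_within_open[where f="\<lambda>x. x - a" and S="{a<..<a+l/2}"])
      using 2 l by (auto simp: tpd_def tp_def intro!: derivative_eq_intros)
  next
    case 3
    show ?thesis
      apply (rule has_field_derivative_transform_within_open[where f="\<lambda>x. a + l - x" and S="{a+l/2<..<a+l}"])
      using 3 l by (auto simp: tpd_def tp_def intro!: derivative_eq_intros)
  next
    case 4
    show ?thesis
      apply (rule has_field_derivative_transform_within_open[where f="\<lambda>_. 0" and S="{a+l<..}"])
      using 4 l by (auto simp: tpd_def tp_def)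
  qed
qed

lemma tpG_deriv:
  assumes l: "l > 0" and x: "x \<notin> {a, a + l/2, a + l}"
  shows "(tpG a l has_real_derivative tp a l x) (at x)"
proof -
  consider "x < a" | "a < x \<and> x < a + l/2" | "a + l/2 < x \<and> x < a + l" | "a + l < x"
    using x l by force
  then show ?thesis
  proof cases
    case 1
    show ?thesis
      apply (rule has_field_derivative_transform_within_open[where f="\<lambda>_. 0" and S="{..<a}"])
      using 1 l by (auto simp: tpG_def tp_def Let_def)
  next
    case 2
    show ?thesis
      apply (rule has_field_derivative_transform_within_open[where f="\<lambda>x. (x - a)^2/2" and S="{a<..<a+l/2}"])
      using 2 l by (auto simp: tpG_def tp_def Let_def intro!: derivative_eq_intros)
  next
    case 3
    show ?thesis
      apply (rule has_field_derivative_transform_within_open[where 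
            f="\<lambda>x. (a + l/2 - a)^2/2 + ((x - (a + l/2)) * (a + l) - (x^2 - (a + l/2)^2)/2)" and S="{a+l/2<..<a+l}"])
      using 3 l by (auto simp: tpG_def tp_def Let_def intro!: derivative_eq_intros simp: algebra_simps)
  next
    case 4
    show ?thesis
      apply (rule has_field_derivative_transform_within_open[where f="\<lambda>_. tpG a l (a + l + 1)" and S="{a+l<..}"])
      using 4 l by (auto simp: tpG_def tp_def Let_def)
  qed
qed

lemma ftc_tp:
  assumes "finite S" "a \<le> b" "\<And>x. x \<in> {a<..<b} - S \<Longrightarrow> (f has_real_derivative f' x) (at x)"
    "continuous_on {a..b} f"
  shows "(f' has_integral (f b - f a)) {a..b}"
  using assms by (intro fundamental_theorem_of_calculus_interior_strong[of S])
    (auto simp: has_real_derivative_iff_has_vector_derivative)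

lemma int_tpd:
  assumes l: "l > 0" and "a0 \<le> a" "a + l \<le> b0"
  shows "(tpd a l has_integral 0) {a0..b0}"
proof -
  have "(tpd a l has_integral (tp a l b0 - tp a l a0)) {a0..b0}"
    using assms by (intro ftc_tp[of "{a, a + l/2, a + l}"] tp_deriv tp_cont) auto
  moreover have "tp a l b0 = 0" "tp a l a0 = 0" using assms by (auto intro: tp_zero)
  ultimately show ?thesis by simp
qed

lemma int_tp:
  assumes l: "l > 0" and "a0 \<le> a" "a + l \<le> b0"
  shows "(tp a l has_integral l^2/4) {a0..b0}"
proof -
  have "(tp a l has_integral (tpG a l b0 - tpG a l a0)) {a0..b0}"
    using assms by (intro ftc_tp[of "{a, a + l/2, a + l}"] tpG_deriv tpG_cont) auto
  moreover have "tpG a l b0 - tpG a l a0 = l^2/4" using assms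
    by (simp add: tpG_def Let_def power2_eq_square algebra_simps) (simp add: field_simps)
  ultimately show ?thesis by simp
qed

lemma int_xtpd:
  assumes l: "l > 0" and "a0 \<le> a" "a + l \<le> b0"
  shows "((\<lambda>x. x * tpd a l x) has_integral -(l^2/4)) {a0..b0}"
proof -
  have "((\<lambda>x. 1 * tp a l x + x * tpd a l x) has_integral (b0 * tp a l b0 - a0 * tp a l a0)) {a0..b0}"
    using assms by (intro ftc_tp[of "{a, a + l/2, a + l}"] tp_deriv derivative_eq_intros
          continuous_intros) (auto intro!: derivative_eq_intros tp_deriv)
  moreover have "tp a l b0 = 0" "tp a l a0 = 0" using assms by (auto intro: tp_zero)
  ultimately have "((\<lambda>x. tp a l x + x * tpd a l x) has_integral 0) {a0..b0}" by simp
  from has_integral_diff[OF this int_tp[OF assms]] show ?thesis by simp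
qed

definition LL :: "nat \<Rightarrow> real" where "LL j = (1/2)^(j+1)"
definition hh :: "nat \<Rightarrow> nat \<Rightarrow> real" where "hh k i = LL k * (1/2)^(i - k + 2)"
definition s1 :: "nat \<Rightarrow> nat \<Rightarrow> real" where "s1 k i = LL k + hh k i"
definition s2 :: "nat \<Rightarrow> nat \<Rightarrow> real" where "s2 k i = LL k + LL k / 4 + hh k i"

definition own :: "nat \<Rightarrow> real \<Rightarrow> real" where
  "own j x = tp (LL j) (LL j / 2) x - tp (LL j + LL j / 2) (LL j / 2) x"
definition ownd :: "nat \<Rightarrow> real \<Rightarrow> real" where
  "ownd j x = tpd (LL j) (LL j / 2) x - tpd (LL j + LL j / 2) (LL j / 2) x"
definition resp :: "nat \<Rightarrow> nat \<Rightarrow> real \<Rightarrow> real" where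
  "resp k i x = tp (s1 k i) (hh k i) x - tp (s2 k i) (hh k i) x"
definition respd :: "nat \<Rightarrow> nat \<Rightarrow> real \<Rightarrow> real" where
  "respd k i x = tpd (s1 k i) (hh k i) x - tpd (s2 k i) (hh k i) x"

lemma LL_pos: "LL j > 0" by (simp add: LL_def)
lemma hh_pos: "hh k i > 0" by (simp add: hh_def LL_pos)

lemma hh_le: "k < i \<Longrightarrow> hh k i \<le> LL k / 8"
proof -
  assume "k < i"
  then have "(1/2::real)^(i - k + 2) \<le> (1/2)^3" by (intro power_decreasing) auto
  also have "(1/2::real)^3 = 1/8" by (simp add: power3_eq_cube)
  finally have q: "(1/2::real)^(i - k + 2) \<le> 1/8" .
  have "LL k * (1/2::real)^(i - k + 2) \<le> LL k * (1/8)"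
    using mult_left_mono[OF q, of "LL k"] LL_pos[of k] by linarith
  then show ?thesis unfolding hh_def by linarith
qed

lemma LL_le: "2 * LL j \<le> 1"
  unfolding LL_def by (simp add: power_le_one)

lemma LL_disj:
  assumes "LL j < x" "x < 2 * LL j" "LL k < x" "x < 2 * LL k" shows "j = k"
proof (rule ccontr)
  assume "j \<noteq> k"
  then consider "j < k" | "k < j" by linarith
  then show False
  proof cases
    case 1
    then have "(1/2::real)^(k) \<le> (1/2)^(j+1)" by (intro power_decreasing) auto
    then have "2 * LL k \<le> LL j" by (simp add: LL_def)
    then show False using assms by linarith
  next
    case 2
    then have "(1/2::real)^(j) \<le> (1/2)^(k+1)" by (intro power_decreasing) auto
    then have "2 * LL j \<le> LL k" by (simp add: LL_def)
    then show False using assms by linarith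
  qed
qed

lemma own_sup: "own j x \<noteq> 0 \<or> ownd j x \<noteq> 0 \<Longrightarrow> LL j < x \<and> x < 2 * LL j"
  using tp_nz[of "LL j / 2" "LL j" x] tp_nz[of "LL j / 2" "LL j + LL j / 2" x]
    tpd_nz[of "LL j" "LL j / 2" x] tpd_nz[of "LL j + LL j / 2" "LL j / 2" x] LL_pos[of j]
  unfolding own_def ownd_def by force

definition slot :: "nat \<Rightarrow> nat \<Rightarrow> real \<Rightarrow> bool" where
  "slot k i x \<longleftrightarrow> (s1 k i < x \<and> x < s1 k i + hh k i) \<or> (s2 k i < x \<and> x < s2 k i + hh k i)"

lemma resp_sup: "resp k i x \<noteq> 0 \<or> respd k i x \<noteq> 0 \<Longrightarrow> slot k i x"
  using tp_nz[of "hh k i" "s1 k i" x] tp_nz[of "hh k i" "s2 k i" x]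
    tpd_nz[of "s1 k i" "hh k i" x] tpd_nz[of "s2 k i" "hh k i" x] hh_pos[of k i]
  unfolding resp_def respd_def slot_def by force

lemma slot_in: "k < i \<Longrightarrow> slot k i x \<Longrightarrow> LL k < x \<and> x < LL k + LL k / 2"
  using hh_le[of k i] hh_pos[of k i] LL_pos[of k] unfolding slot_def s1_def s2_def by auto

lemma slot_disj:
  assumes "k < i" "k < i'" "i \<noteq> i'" "slot k i x" shows "\<not> slot k i' x"
proof -
  have key: "slot k b x \<Longrightarrow> slot k a x \<Longrightarrow> k < a \<Longrightarrow> a < b \<Longrightarrow> False" for a b
  proof -
    assume sb: "slot k b x" and sa: "slot k a x" and ka: "k < a" and ab: "a < b"
    have "(1/2::real)^(b - k + 2) \<le> (1/2)^(a - k + 3)" using ka ab by (intro power_decreasing) auto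
    also have "(1/2::real)^(a - k + 3) = (1/2)^(a - k + 2) / 2" by (simp only: power_add) (simp add: power2_eq_square power3_eq_cube)
    finally have q: "(1/2::real)^(b - k + 2) \<le> (1/2)^(a - k + 2) / 2" .
    have "LL k * (1/2::real)^(b - k + 2) \<le> LL k * ((1/2)^(a - k + 2) / 2)"
      using mult_left_mono[OF q, of "LL k"] LL_pos[of k] by linarith
    then have "hh k b \<le> hh k a / 2" unfolding hh_def by simp
    moreover have "hh k a \<le> LL k / 8" using hh_le ka by auto
    moreover note hh_pos[of k a] hh_pos[of k b] LL_pos[of k]
    ultimately show False using sa sb unfolding slot_def s1_def s2_def by auto
  qed
  show ?thesis
  proof
    assume "slot k i' x"
    then show False using key assms by (metis linorder_neqE_nat)
  qed
qed

lemma slot_S: "k < i \<Longrightarrow> slot k i x \<Longrightarrow> LL k < x \<and> x < 2 * LL k"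
  using slot_in[of k i x] LL_pos[of k] by auto

definition dd :: "nat \<Rightarrow> real" where "dd k = (1/2)^(k+4)"
definition ee :: "(nat \<times> nat) set \<Rightarrow> nat \<Rightarrow> nat \<Rightarrow> real" where
  "ee U i k = (if (i, k) \<in> U then -1 else 1)"
definition AA :: "(nat \<times> nat) set \<Rightarrow> nat \<Rightarrow> real \<Rightarrow> real" where
  "AA U i x = own i x / 8 + (\<Sum>k<i. dd k * ee U i k * resp k i x)"
definition DD :: "(nat \<times> nat) set \<Rightarrow> nat \<Rightarrow> real \<Rightarrow> real" where
  "DD U i x = ownd i x / 8 + (\<Sum>k<i. dd k * ee U i k * respd k i x)"

lemma sum_single:
  assumes "finite A" "\<And>k. k \<in> A \<Longrightarrow> k \<noteq> j \<Longrightarrow> f k = 0"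
  shows "sum f A = (if j \<in> A then f j else 0)"
proof (cases "j \<in> A")
  case True
  then have "sum f A = f j + sum f (A - {j})" using assms(1) by (simp add: sum.remove)
  also have "sum f (A - {j}) = 0" using assms(2) by (intro sum.neutral) auto
  finally show ?thesis using True by simp
next
  case False
  then show ?thesis using assms by (auto intro!: sum.neutral)
qed

lemma resp_off:
  assumes "k < i" "LL j < x" "x < 2 * LL j" "k \<noteq> j"
  shows "resp k i x = 0" "respd k i x = 0"
  using resp_sup[of k i x] slot_S[of k i x] LL_disj[of j x k] assms by auto

lemma own_off:
  assumes "LL j < x" "x < 2 * LL j" "i \<noteq> j"
  shows "own i x = 0" "ownd i x = 0"
  using own_sup[of i x] LL_disj[of j x i] assms by auto

lemma own1_off: "\<not> (LL j < x \<and> x < 2 * LL j) \<Longrightarrow> tp (LL j) (LL j / 2) x = 0"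
  using tp_nz[of "LL j / 2" "LL j" x] LL_pos[of j] by force

lemma tpd1_off: "\<not> (LL j < x \<and> x < 2 * LL j) \<Longrightarrow> tpd (LL j) (LL j / 2) x = 0"
  using tpd_nz[of "LL j" "LL j / 2" x] LL_pos[of j] by force

lemma own_slot: "j < i \<Longrightarrow> respd j i x \<noteq> 0 \<Longrightarrow> own j x = tp (LL j) (LL j / 2) x"
  using resp_sup[of j i x] slot_in[of j i x] LL_pos[of j]
  unfolding own_def by (auto intro!: tp_zero)

lemma ownd_slot: "j < i \<Longrightarrow> resp j i x \<noteq> 0 \<Longrightarrow> ownd j x = tpd (LL j) (LL j / 2) x"
  using resp_sup[of j i x] slot_in[of j i x] LL_pos[of j]
  unfolding ownd_def tpd_def by auto

lemma prod1:
  assumes ji: "j < i"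
  shows "AA U j x * DD U i x = (1/8) * dd j * ee U i j * (tp (LL j) (LL j / 2) x * respd j i x)"
proof (cases "LL j < x \<and> x < 2 * LL j")
  case True
  have "AA U j x = own j x / 8"
    unfolding AA_def using resp_off(1)[of _ j j x] True by (auto intro!: sum.neutral)
  moreover have "DD U i x = dd j * ee U i j * respd j i x"
    unfolding DD_def using resp_off(2)[of _ i j x] own_off(2)[of j x i] True ji
    by (subst sum_single[where j=j]) auto
  ultimately have "AA U j x * DD U i x = (1/8) * dd j * ee U i j * (own j x * respd j i x)"
    by (simp add: algebra_simps)
  moreover have "own j x * respd j i x = tp (LL j) (LL j / 2) x * respd j i x"
    using own_slot[OF ji, of x] by (cases "respd j i x = 0") auto
  ultimately show ?thesis by simp
next
  case False
  have r: "tp (LL j) (LL j / 2) x = 0" using own1_off[OF False] .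
  have o: "own j x = 0" using own_sup[of j x] False by auto
  show ?thesis
  proof (cases "AA U j x = 0")
    case True then show ?thesis using r by simp
  next
    case nz: False
    have "\<exists>k<j. resp k j x \<noteq> 0"
    proof (rule ccontr)
      assume "\<not> (\<exists>k<j. resp k j x \<noteq> 0)"
      then have "(\<Sum>k<j. dd k * ee U j k * resp k j x) = 0" by (auto intro!: sum.neutral)
      with nz o show False unfolding AA_def by simp
    qed
    then obtain k where k: "k < j" "resp k j x \<noteq> 0" by blast
    have sl: "slot k j x" using resp_sup k by auto
    have S: "LL k < x" "x < 2 * LL k" using slot_S[OF k(1) sl] by auto
    have "\<not> slot k i x" using slot_disj[of k j i x] k ji sl by auto
    then have "respd k i x = 0" using resp_sup[of k i x] by auto
    then have "DD U i x = 0"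
      unfolding DD_def using own_off(2)[of k x i] S resp_off(2)[of _ i k x] k ji
      by (subst sum_single[where j=k]) auto
    then show ?thesis using r by simp
  qed
qed

lemma prod2:
  assumes ji: "j < i"
  shows "AA U i x * DD U j x = (1/8) * dd j * ee U i j * (resp j i x * tpd (LL j) (LL j / 2) x)"
proof (cases "LL j < x \<and> x < 2 * LL j")
  case True
  have "DD U j x = ownd j x / 8"
    unfolding DD_def using resp_off(2)[of _ j j x] True by (auto intro!: sum.neutral)
  moreover have "AA U i x = dd j * ee U i j * resp j i x"
    unfolding AA_def using resp_off(1)[of _ i j x] own_off(1)[of j x i] True ji
    by (subst sum_single[where j=j]) auto
  ultimately have "AA U i x * DD U j x = (1/8) * dd j * ee U i j * (resp j i x * ownd j x)"
    by (simp add: algebra_simps)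
  moreover have "resp j i x * ownd j x = resp j i x * tpd (LL j) (LL j / 2) x"
    using ownd_slot[OF ji, of x] by (cases "resp j i x = 0") auto
  ultimately show ?thesis by simp
next
  case False
  have r: "tpd (LL j) (LL j / 2) x = 0" using tpd1_off[OF False] .
  have o: "ownd j x = 0" using own_sup[of j x] False by auto
  show ?thesis
  proof (cases "DD U j x = 0")
    case True then show ?thesis using r by simp
  next
    case nz: False
    have "\<exists>k<j. respd k j x \<noteq> 0"
    proof (rule ccontr)
      assume "\<not> (\<exists>k<j. respd k j x \<noteq> 0)"
      then have "(\<Sum>k<j. dd k * ee U j k * respd k j x) = 0" by (auto intro!: sum.neutral)
      with nz o show False unfolding DD_def by simp
    qed
    then obtain k where k: "k < j" "respd k j x \<noteq> 0" by blast
    have sl: "slot k j x" using resp_sup k by auto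
    have S: "LL k < x" "x < 2 * LL k" using slot_S[OF k(1) sl] by auto
    have "\<not> slot k i x" using slot_disj[of k j i x] k ji sl by auto
    then have "resp k i x = 0" using resp_sup[of k i x] by auto
    then have "AA U i x = 0"
      unfolding AA_def using own_off(1)[of k x i] S resp_off(1)[of _ i k x] k ji
      by (subst sum_single[where j=k]) auto
    then show ?thesis using r by simp
  qed
qed

lemma prod_rise:
  assumes "0 < l" "0 < m" "\<alpha> \<le> \<beta>" "\<beta> + m \<le> \<alpha> + l/2" "a0 \<le> \<beta>" "\<beta> + m \<le> b0"
  shows "((\<lambda>x. tp \<alpha> l x * tpd \<beta> m x) has_integral -(m^2/4)) {a0..b0}"
proof -
  have eq: "(\<lambda>x. tp \<alpha> l x * tpd \<beta> m x) = (\<lambda>x. x * tpd \<beta> m x - \<alpha> * tpd \<beta> m x)"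
  proof
    fix x show "tp \<alpha> l x * tpd \<beta> m x = x * tpd \<beta> m x - \<alpha> * tpd \<beta> m x"
    proof (cases "tpd \<beta> m x = 0")
      case False
      then have "\<beta> < x" "x < \<beta> + m" using tpd_nz by auto
      then have "tp \<alpha> l x = x - \<alpha>" using assms by (intro tp_rise) auto
      then show ?thesis by (simp only: left_diff_distrib)
    qed simp
  qed
  have "((\<lambda>x. x * tpd \<beta> m x - \<alpha> * tpd \<beta> m x) has_integral (-(m^2/4) - \<alpha> * 0)) {a0..b0}"
    using assms by (intro has_integral_diff int_xtpd has_integral_mult_right int_tpd) auto
  then show ?thesis unfolding eq by simp
qed

lemma prod_fall:
  assumes "0 < l" "0 < m" "\<alpha> + l/2 \<le> \<beta>" "\<beta> + m \<le> \<alpha> + l" "a0 \<le> \<beta>" "\<beta> + m \<le> b0"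
  shows "((\<lambda>x. tp \<alpha> l x * tpd \<beta> m x) has_integral (m^2/4)) {a0..b0}"
proof -
  have eq: "(\<lambda>x. tp \<alpha> l x * tpd \<beta> m x) = (\<lambda>x. (\<alpha> + l) * tpd \<beta> m x - x * tpd \<beta> m x)"
  proof
    fix x show "tp \<alpha> l x * tpd \<beta> m x = (\<alpha> + l) * tpd \<beta> m x - x * tpd \<beta> m x"
    proof (cases "tpd \<beta> m x = 0")
      case False
      then have "\<beta> < x" "x < \<beta> + m" using tpd_nz by auto
      then have "tp \<alpha> l x = \<alpha> + l - x" using assms by (intro tp_fall) auto
      then show ?thesis by (simp only: left_diff_distrib)
    qed simp
  qed
  have "((\<lambda>x. (\<alpha> + l) * tpd \<beta> m x - x * tpd \<beta> m x) has_integral ((\<alpha> + l) * 0 - (-(m^2/4)))) {a0..b0}"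
    using assms by (intro has_integral_diff int_xtpd has_integral_mult_right int_tpd) auto
  then show ?thesis unfolding eq by simp
qed

lemma prod2_rise:
  assumes "0 < l" "0 < m" "\<alpha> \<le> \<beta>" "\<beta> + m \<le> \<alpha> + l/2" "a0 \<le> \<beta>" "\<beta> + m \<le> b0"
  shows "((\<lambda>x. tp \<beta> m x * tpd \<alpha> l x) has_integral (m^2/4)) {a0..b0}"
proof -
  have eq: "(\<lambda>x. tp \<beta> m x * tpd \<alpha> l x) = tp \<beta> m"
  proof
    fix x show "tp \<beta> m x * tpd \<alpha> l x = tp \<beta> m x"
    proof (cases "tp \<beta> m x = 0")
      case False
      then have "\<beta> < x" "x < \<beta> + m" using tp_nz assms by auto
      then have "tpd \<alpha> l x = 1" using assms unfolding tpd_def by auto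
      then show ?thesis by simp
    qed simp
  qed
  show ?thesis unfolding eq using assms by (intro int_tp) auto
qed

lemma prod2_fall:
  assumes "0 < l" "0 < m" "\<alpha> + l/2 \<le> \<beta>" "\<beta> + m \<le> \<alpha> + l" "a0 \<le> \<beta>" "\<beta> + m \<le> b0"
  shows "((\<lambda>x. tp \<beta> m x * tpd \<alpha> l x) has_integral -(m^2/4)) {a0..b0}"
proof -
  have eq: "(\<lambda>x. tp \<beta> m x * tpd \<alpha> l x) = (\<lambda>x. - tp \<beta> m x)"
  proof
    fix x show "tp \<beta> m x * tpd \<alpha> l x = - tp \<beta> m x"
    proof (cases "tp \<beta> m x = 0")
      case False
      then have "\<beta> < x" "x < \<beta> + m" using tp_nz assms by auto
      then have "tpd \<alpha> l x = -1" using assms unfolding tpd_def by auto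
      then show ?thesis by simp
    qed simp
  qed
  show ?thesis unfolding eq using assms by (intro has_integral_neg int_tp) auto
qed

lemma geom_facts:
  assumes "j < i"
  shows "LL j \<le> s1 j i" "s1 j i + hh j i \<le> LL j + (LL j / 2) / 2"
    "LL j + (LL j / 2) / 2 \<le> s2 j i" "s2 j i + hh j i \<le> LL j + LL j / 2"
    "0 \<le> s1 j i" "s2 j i + hh j i \<le> 1" "s1 j i + hh j i \<le> 1" "0 \<le> s2 j i"
  using hh_le[OF assms] hh_pos[of j i] LL_pos[of j] LL_le[of j] unfolding s1_def s2_def by auto

lemma int_AD:
  assumes ji: "j < i"
  shows "((\<lambda>x. AA U j x * DD U i x) has_integral -((1/8) * dd j * ee U i j * (hh j i^2/2))) {0..1}"
proof -
  have "((\<lambda>x. tp (LL j) (LL j / 2) x * tpd (s1 j i) (hh j i) x - tp (LL j) (LL j / 2) x * tpd (s2 j i) (hh j i) x)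
     has_integral (-(hh j i^2/4) - hh j i^2/4)) {0..1}"
    using geom_facts[OF ji] LL_pos[of j] hh_pos[of j i]
    by (intro has_integral_diff prod_rise prod_fall) auto
  then have "((\<lambda>x. (1/8) * dd j * ee U i j * (tp (LL j) (LL j / 2) x * respd j i x))
     has_integral ((1/8) * dd j * ee U i j * (-(hh j i^2/4) - hh j i^2/4))) {0..1}"
    unfolding respd_def by (intro has_integral_mult_right) (simp add: algebra_simps)
  then show ?thesis unfolding prod1[OF ji] by (simp add: algebra_simps)
qed

lemma int_AD2:
  assumes ji: "j < i"
  shows "((\<lambda>x. AA U i x * DD U j x) has_integral ((1/8) * dd j * ee U i j * (hh j i^2/2))) {0..1}"
proof -
  have "((\<lambda>x. tp (s1 j i) (hh j i) x * tpd (LL j) (LL j / 2) x - tp (s2 j i) (hh j i) x * tpd (LL j) (LL j / 2) x)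
     has_integral ((hh j i^2/4) - (-(hh j i^2/4)))) {0..1}"
    using geom_facts[OF ji] LL_pos[of j] hh_pos[of j i]
    by (intro has_integral_diff prod2_rise prod2_fall) auto
  then have "((\<lambda>x. (1/8) * dd j * ee U i j * (resp j i x * tpd (LL j) (LL j / 2) x))
     has_integral ((1/8) * dd j * ee U i j * ((hh j i^2/4) - (-(hh j i^2/4))))) {0..1}"
    unfolding resp_def by (intro has_integral_mult_right) (simp add: algebra_simps)
  then show ?thesis unfolding prod2[OF ji] by (simp add: algebra_simps)
qed

lemma own_geom: "0 \<le> LL j" "LL j + LL j / 2 + LL j / 2 \<le> 1" "LL j + LL j / 2 \<le> 1"
  using LL_pos[of j] LL_le[of j] by auto

lemma int_A: "(AA U i has_integral 0) {0..1}"
proof -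
  have o: "(own i has_integral ((LL i / 2)^2/4 - (LL i / 2)^2/4)) {0..1}"
    unfolding own_def[abs_def] using own_geom[of i] LL_pos[of i]
    by (intro has_integral_diff int_tp) auto
  have r: "(resp k i has_integral (hh k i^2/4 - hh k i^2/4)) {0..1}" if "k < i" for k
    unfolding resp_def[abs_def] using geom_facts[OF that] hh_pos[of k i]
    by (intro has_integral_diff int_tp) auto
  have "((\<lambda>x. own i x / 8 + (\<Sum>k<i. dd k * ee U i k * resp k i x)) has_integral
     (0 / 8 + (\<Sum>k<i. dd k * ee U i k * 0))) {0..1}"
    using o r by (intro has_integral_add has_integral_sum has_integral_divide has_integral_mult_right) auto
  then show ?thesis unfolding AA_def[abs_def] by simp
qed

lemma int_xD: "((\<lambda>x. x * DD U i x) has_integral 0) {0..1}"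
proof -
  have o: "((\<lambda>x. x * tpd (LL i) (LL i / 2) x - x * tpd (LL i + LL i / 2) (LL i / 2) x) has_integral
      (-((LL i / 2)^2/4) - (-((LL i / 2)^2/4)))) {0..1}"
    using own_geom[of i] LL_pos[of i]
    by (intro has_integral_diff int_xtpd) auto
  have r: "((\<lambda>x. x * tpd (s1 k i) (hh k i) x - x * tpd (s2 k i) (hh k i) x) has_integral
     (-(hh k i^2/4) - (-(hh k i^2/4)))) {0..1}" if "k < i" for k
    using geom_facts[OF that] hh_pos[of k i]
    by (intro has_integral_diff int_xtpd) auto
  have "((\<lambda>x. (x * tpd (LL i) (LL i / 2) x - x * tpd (LL i + LL i / 2) (LL i / 2) x) / 8 +
       (\<Sum>k<i. dd k * ee U i k * (x * tpd (s1 k i) (hh k i) x - x * tpd (s2 k i) (hh k i) x))) has_integral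
     (0 / 8 + (\<Sum>k<i. dd k * ee U i k * 0))) {0..1}"
    using o r by (intro has_integral_add has_integral_sum has_integral_divide has_integral_mult_right) auto
  moreover have "(\<lambda>x. x * DD U i x) = (\<lambda>x. (x * tpd (LL i) (LL i / 2) x - x * tpd (LL i + LL i / 2) (LL i / 2) x) / 8 +
       (\<Sum>k<i. dd k * ee U i k * (x * tpd (s1 k i) (hh k i) x - x * tpd (s2 k i) (hh k i) x)))"
    unfolding DD_def ownd_def respd_def
    by (auto simp: fun_eq_iff sum_distrib_left algebra_simps intro!: sum.cong)
  ultimately show ?thesis by simp
qed

definition FF :: "(nat \<times> nat) set \<Rightarrow> nat \<Rightarrow> real \<Rightarrow> real" where
  "FF U i x = x + AA U i x"

definition kinks :: "real \<Rightarrow> real \<Rightarrow> real set" where "kinks a l = {a, a + l/2, a + l}"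

definition EE :: "nat \<Rightarrow> real set" where
  "EE i = kinks (LL i) (LL i / 2) \<union> kinks (LL i + LL i / 2) (LL i / 2) \<union>
     (\<Union>k\<in>{..<i}. kinks (s1 k i) (hh k i) \<union> kinks (s2 k i) (hh k i))"

lemma EE_finite: "finite (EE i)"
  unfolding EE_def kinks_def by auto

lemma AA_cont: "continuous_on S (AA U i)"
  unfolding AA_def[abs_def] own_def resp_def by (intro continuous_intros) auto

lemma AA_meas[measurable]: "AA U i \<in> borel_measurable borel"
  by (intro borel_measurable_continuous_onI AA_cont)

lemma DD_meas[measurable]: "DD U i \<in> borel_measurable borel"
  unfolding DD_def[abs_def] ownd_def respd_def by measurable

lemma AA_deriv:
  assumes "x \<notin> EE i"
  shows "(AA U i has_real_derivative DD U i x) (at x)"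
proof -
  have o: "(own i has_real_derivative ownd i x) (at x)"
    unfolding own_def[abs_def] ownd_def using assms LL_pos[of i]
    by (intro DERIV_diff tp_deriv) (auto simp: EE_def kinks_def)
  have r: "(resp k i has_real_derivative respd k i x) (at x)" if "k < i" for k
    unfolding resp_def[abs_def] respd_def using assms hh_pos[of k i] that
    by (intro DERIV_diff tp_deriv) (auto simp: EE_def kinks_def)
  have "((\<lambda>x. own i x / 8 + (\<Sum>k<i. dd k * ee U i k * resp k i x)) has_real_derivative
      (ownd i x / 8 + (\<Sum>k<i. dd k * ee U i k * respd k i x))) (at x)"
    using o r by (intro DERIV_add DERIV_cdivide DERIV_sum DERIV_cmult) auto
  then show ?thesis unfolding AA_def[abs_def] DD_def by simp
qed

lemma AA_zero_out:
  assumes "x \<le> 0 \<or> 1 \<le> x"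
  shows "AA U i x = 0"
proof -
  have "tp (LL i) (LL i / 2) x = 0" by (rule tp_zero) (use assms own_geom[of i] LL_pos[of i] in auto)
  moreover have "tp (LL i + LL i / 2) (LL i / 2) x = 0"
    by (rule tp_zero) (use assms own_geom[of i] LL_pos[of i] in auto)
  ultimately have "own i x = 0" unfolding own_def by simp
  moreover have "resp k i x = 0" if "k < i" for k
  proof -
    have "tp (s1 k i) (hh k i) x = 0" by (rule tp_zero) (use assms geom_facts[OF that] hh_pos[of k i] in auto)
    moreover have "tp (s2 k i) (hh k i) x = 0"
      by (rule tp_zero) (use assms geom_facts[OF that] hh_pos[of k i] in auto)
    ultimately show ?thesis unfolding resp_def by simp
  qed
  ultimately show ?thesis unfolding AA_def by simp
qed

lemma geom_sum: "(\<Sum>k<n. (1/2::real)^k) = 2 - 2 * (1/2)^n"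
  by (induction n) auto

lemma DD_bound: "\<bar>DD U i x\<bar> \<le> 1/2"
proof -
  have o: "\<bar>ownd i x / 8\<bar> \<le> 1/4"
    using tpd_bound[of "LL i" "LL i / 2" x] tpd_bound[of "LL i + LL i / 2" "LL i / 2" x]
    unfolding ownd_def by auto
  have t: "\<bar>dd k * ee U i k * respd k i x\<bar> \<le> (1/8) * (1/2)^k" for k
  proof -
    have "\<bar>respd k i x\<bar> \<le> 2"
      using tpd_bound[of "s1 k i" "hh k i" x] tpd_bound[of "s2 k i" "hh k i" x]
      unfolding respd_def by auto
    moreover have "\<bar>ee U i k\<bar> = 1" by (simp add: ee_def)
    moreover have d: "dd k = (1/16) * (1/2)^k" by (simp add: dd_def power_add eval_nat_numeral)
    moreover have "dd k \<ge> 0" by (simp add: dd_def)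
    ultimately have "\<bar>dd k * ee U i k * respd k i x\<bar> = dd k * \<bar>respd k i x\<bar>" by (simp add: abs_mult)
    also have "\<dots> \<le> dd k * 2" by (rule mult_left_mono) (use \<open>\<bar>respd k i x\<bar> \<le> 2\<close> \<open>dd k \<ge> 0\<close> in auto)
    also have "\<dots> = (1/8) * (1/2)^k" using d by simp
    finally show ?thesis .
  qed
  have "\<bar>\<Sum>k<i. dd k * ee U i k * respd k i x\<bar> \<le> (\<Sum>k<i. (1/8) * (1/2::real)^k)"
    by (rule order_trans[OF sum_abs sum_mono[OF t]])
  also have "\<dots> = (1/8) * (2 - 2 * (1/2)^i)" by (simp only: sum_distrib_left[symmetric] geom_sum)
  also have "\<dots> \<le> 1/4" by simp
  finally show ?thesis using o unfolding DD_def by linarith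
qed

lemma DD_lower: "1/2 \<le> 1 + DD U i t"
  using DD_bound[of U i t] abs_le_iff[of "DD U i t" "1/2"] by linarith

lemma F_int:
  assumes "a \<le> b"
  shows "((\<lambda>t. 1 + DD U i t) has_integral (FF U i b - FF U i a)) {a..b}"
  unfolding FF_def using assms EE_finite[of i]
  by (intro ftc_tp[of "EE i"]) (auto intro!: derivative_eq_intros AA_deriv continuous_intros AA_cont)

lemma F0: "FF U i 0 = 0" and F1: "FF U i 1 = 1"
  unfolding FF_def using AA_zero_out[of 0 U i] AA_zero_out[of 1 U i] by auto

lemma F_mono:
  assumes "x \<le> y"
  shows "FF U i x + (y - x)/2 \<le> FF U i y"
proof -
  have c: "((\<lambda>t. 1/2) has_integral (1/2) * (y - x)) {x..y}"
    using has_integral_const_real[of "1/2::real" x y] assms by simp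
  have "1/2 * (y - x) \<le> FF U i y - FF U i x"
    by (rule has_integral_le[OF c F_int[OF assms]]) (rule DD_lower)
  then show ?thesis by linarith
qed

lemma F_cont: "continuous_on S (FF U i)"
  unfolding FF_def[abs_def] by (intro continuous_intros AA_cont)

lemma int_x: "((\<lambda>x::real. x) has_integral 1/2) {0..1}"
proof -
  have "((\<lambda>x::real. x) has_integral (1^2/2 - 0^2/2)) {0..1}"
    by (intro ftc_tp[of "{}"]) (auto intro!: derivative_eq_intros continuous_intros)
  then show ?thesis by simp
qed

lemma P_int:
  assumes T: "tournament UNIV U" and ij: "i \<noteq> j"
  shows "\<exists>Q. ((\<lambda>x. (1 + DD U i x) * (x + AA U j x)) has_integral (1/2 + Q)) {0..1} \<and> (Q > 0 \<longleftrightarrow> (i, j) \<in> U)"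
proof -
  obtain Q where Q: "((\<lambda>x. AA U j x * DD U i x) has_integral Q) {0..1}" and QU: "Q > 0 \<longleftrightarrow> (i, j) \<in> U"
  proof (cases "j < i")
    case True
    have pos: "(1/8) * dd j * (hh j i^2/2) > 0" using hh_pos[of j i] by (simp add: dd_def)
    show ?thesis
      apply (rule that[OF int_AD[OF True]])
      using pos by (auto simp: ee_def)
  next
    case False
    then have ji: "i < j" using ij by linarith
    have pos: "(1/8) * dd i * (hh i j^2/2) > 0" using hh_pos[of i j] by (simp add: dd_def)
    have "\<forall>i\<in>UNIV. \<forall>j\<in>UNIV. i \<noteq> j \<longrightarrow> ((i, j) \<in> U \<longleftrightarrow> (j, i) \<notin> U)"
      using T unfolding tournament_def by blast
    then have "(j, i) \<in> U \<longleftrightarrow> (i, j) \<notin> U" using ij by blast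
    then show ?thesis
      apply -
      apply (rule that[OF int_AD2[OF ji]])
      using pos by (auto simp: ee_def)
  qed
  have "((\<lambda>x. x + AA U j x + x * DD U i x + AA U j x * DD U i x) has_integral (1/2 + 0 + 0 + Q)) {0..1}"
    by (intro has_integral_add int_x int_A int_xD Q)
  moreover have "(\<lambda>x. (1 + DD U i x) * (x + AA U j x)) = (\<lambda>x. x + AA U j x + x * DD U i x + AA U j x * DD U i x)"
    by (auto simp: fun_eq_iff algebra_simps)
  ultimately show ?thesis using QU by auto
qed

definition gg :: "(nat \<times> nat) set \<Rightarrow> nat \<Rightarrow> real \<Rightarrow> real" where
  "gg U i x = indicator {0..1} x * (1 + DD U i x)"

definition mu :: "(nat \<times> nat) set \<Rightarrow> nat \<Rightarrow> real measure" where
  "mu U i = density lborel (\<lambda>x. ennreal (gg U i x))"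

lemma gg_nonneg: "0 \<le> gg U i x"
  unfolding gg_def using DD_lower[of U i x] by (auto simp: indicator_def)

lemma gg_meas[measurable]: "gg U i \<in> borel_measurable borel"
  unfolding gg_def[abs_def] by measurable

lemma sets_mu[simp]: "sets (mu U i) = sets borel" and space_mu[simp]: "space (mu U i) = UNIV"
  unfolding mu_def by auto

lemma F_nonneg: assumes "0 \<le> x" shows "0 \<le> FF U i x"
proof -
  have "x/2 \<le> FF U i x" using F_mono[OF assms, of U i] by (simp add: F0)
  moreover have "0 \<le> x/2" using assms by simp
  ultimately show ?thesis using order_trans by blast
qed

lemma emeasure_mu_le:
  assumes "0 \<le> x" "x \<le> 1"
  shows "emeasure (mu U i) {..x} = ennreal (FF U i x)"
proof -
  have "emeasure (mu U i) {..x} = (\<integral>\<^sup>+ y. ennreal (gg U i y) * indicator {..x} y \<partial>lborel)"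
    unfolding mu_def by (subst emeasure_density) auto
  also have "\<dots> = (\<integral>\<^sup>+ y. ennreal (indicator {0..x} y * (1 + DD U i y)) \<partial>lborel)"
    using assms by (intro nn_integral_cong) (auto simp: gg_def indicator_def)
  also have "\<dots> = ennreal (FF U i x)"
  proof -
    have "((\<lambda>t. 1 + DD U i t) has_integral (FF U i x - FF U i 0)) {0..x}"
      using assms by (intro F_int) auto
    then have "((\<lambda>t. 1 + DD U i t) has_integral (FF U i x)) {0..x}" by (simp add: F0)
    then show ?thesis
      using DD_lower[of U i] by (intro nn_integral_has_integral_lebesgue) (auto intro: order_trans[of 0 "1/2"])
  qed
  finally show ?thesis .
qed

lemma emeasure_mu_less:
  assumes "0 \<le> x" "x \<le> 1"
  shows "emeasure (mu U i) {..<x} = ennreal (FF U i x)"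
proof -
  have "emeasure (mu U i) {..<x} = (\<integral>\<^sup>+ y. ennreal (gg U i y) * indicator {..<x} y \<partial>lborel)"
    unfolding mu_def by (subst emeasure_density) auto
  also have "\<dots> = (\<integral>\<^sup>+ y. ennreal (gg U i y) * indicator {..x} y \<partial>lborel)"
    by (intro nn_integral_cong_AE) (use AE_lborel_singleton[of x] in \<open>auto simp: indicator_def elim!: eventually_mono\<close>)
  also have "\<dots> = emeasure (mu U i) {..x}"
    unfolding mu_def by (subst emeasure_density) auto
  finally show ?thesis using emeasure_mu_le[OF assms] by simp
qed

lemma mu_prob: "prob_space (mu U i)"
proof (rule prob_spaceI)
  have "emeasure (mu U i) (space (mu U i)) = (\<integral>\<^sup>+ y. ennreal (gg U i y) * indicator UNIV y \<partial>lborel)"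
    unfolding mu_def by (subst emeasure_density) auto
  also have "\<dots> = (\<integral>\<^sup>+ y. ennreal (gg U i y) * indicator {..1} y \<partial>lborel)"
    by (intro nn_integral_cong) (auto simp: gg_def indicator_def)
  also have "\<dots> = emeasure (mu U i) {..1}"
    unfolding mu_def by (subst emeasure_density) auto
  also have "\<dots> = 1" using emeasure_mu_le[of 1 U i] F1[of U i] by simp
  finally show "emeasure (mu U i) (space (mu U i)) = 1" .
qed

lemma mean_mu: "integral\<^sup>L (mu U i) (\<lambda>x. x) = 1/2"
proof -
  have "integral\<^sup>L (mu U i) (\<lambda>x. x) = integral\<^sup>L lborel (\<lambda>x. gg U i x *\<^sub>R x)"
    unfolding mu_def by (rule integral_density) (auto simp: gg_nonneg)
  also have "\<dots> = integral\<^sup>L lborel (\<lambda>x. gg U i x * x)" by simp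
  also have "\<dots> = enn2real (\<integral>\<^sup>+ x. ennreal (gg U i x * x) \<partial>lborel)"
    by (rule integral_eq_nn_integral) (auto simp: gg_def indicator_def intro!: mult_nonneg_nonneg
        order_trans[OF _ DD_lower[of U i]])
  also have "(\<integral>\<^sup>+ x. ennreal (gg U i x * x) \<partial>lborel) = (\<integral>\<^sup>+ x. ennreal (indicator {0..1} x * (x + x * DD U i x)) \<partial>lborel)"
    by (intro nn_integral_cong) (auto simp: gg_def indicator_def algebra_simps)
  also have "\<dots> = ennreal (1/2 + 0)"
  proof (rule nn_integral_has_integral_lebesgue)
    show "((\<lambda>x. x + x * DD U i x) has_integral (1/2 + 0)) {0..1}"
      by (intro has_integral_add int_x int_xD)
    fix x :: real assume "x \<in> {0..1}"
    then show "0 \<le> x + x * DD U i x"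
      using DD_lower[of U i x] mult_nonneg_nonneg[of x "1 + DD U i x"] by (auto simp: algebra_simps)
  qed
  finally have "integral\<^sup>L (mu U i) (\<lambda>x. x) = enn2real (ennreal (1/2 + 0))" .
  then show ?thesis by (subst (asm) enn2real_ennreal) auto
qed

lemma pair_mu:
  assumes T: "tournament UNIV U" and ij: "i \<noteq> j"
  shows "measure (mu U i \<Otimes>\<^sub>M mu U j) {p. snd p < fst p} > 1/2 \<longleftrightarrow> (i, j) \<in> U"
proof -
  interpret Pj: prob_space "mu U j" by (rule mu_prob)
  obtain Q where Q: "((\<lambda>x. (1 + DD U i x) * (x + AA U j x)) has_integral (1/2 + Q)) {0..1}"
    and QU: "Q > 0 \<longleftrightarrow> (i, j) \<in> U"
    using P_int[OF T ij] by blast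
  have nonneg: "0 \<le> (1 + DD U i x) * (x + AA U j x)" if "x \<in> {0..1}" for x
    using DD_lower[of U i x] F_nonneg[of x U j] that by (auto simp: FF_def intro!: mult_nonneg_nonneg)
  have S: "{p. snd p < fst p} \<in> sets (mu U i \<Otimes>\<^sub>M mu U j)"
  proof -
    have "{p \<in> space (borel \<Otimes>\<^sub>M borel). snd p < (fst p::real)} \<in> sets (borel \<Otimes>\<^sub>M borel)"
      by measurable
    moreover have "sets (mu U i \<Otimes>\<^sub>M mu U j) = sets (borel \<Otimes>\<^sub>M borel)"
      by (intro sets_pair_measure_cong) auto
    ultimately show ?thesis by (simp add: space_pair_measure)
  qed
  have mono: "(\<lambda>a. measure (mu U j) {..<a}) \<in> borel_measurable borel"
    by (intro borel_measurable_mono monoI Pj.finite_measure_mono) auto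
  have "emeasure (mu U i \<Otimes>\<^sub>M mu U j) {p. snd p < fst p} =
      (\<integral>\<^sup>+a. emeasure (mu U j) (Pair a -` {p. snd p < fst p}) \<partial>mu U i)"
    by (rule Pj.emeasure_pair_measure_alt[OF S])
  also have "\<dots> = (\<integral>\<^sup>+a. ennreal (measure (mu U j) {..<a}) \<partial>mu U i)"
    by (intro nn_integral_cong) (auto simp: Pj.emeasure_eq_measure vimage_def lessThan_def)
  also have "\<dots> = (\<integral>\<^sup>+a. ennreal (gg U i a) * ennreal (measure (mu U j) {..<a}) \<partial>lborel)"
    using mono unfolding mu_def by (subst nn_integral_density) auto
  also have "\<dots> = (\<integral>\<^sup>+a. ennreal (indicator {0..1} a * ((1 + DD U i a) * (a + AA U j a))) \<partial>lborel)"
  proof (intro nn_integral_cong)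
    fix a :: real
    show "ennreal (gg U i a) * ennreal (measure (mu U j) {..<a}) =
        ennreal (indicator {0..1} a * ((1 + DD U i a) * (a + AA U j a)))"
    proof (cases "a \<in> {0..1}")
      case True
      then have "measure (mu U j) {..<a} = FF U j a"
        using emeasure_mu_less[of a U j] F_nonneg[of a U j] by (simp add: Pj.emeasure_eq_measure)
      have n1: "0 \<le> 1 + DD U i a" using DD_lower[of U i a] by linarith
      have n2: "0 \<le> a + AA U j a" using F_nonneg[of a U j] True by (simp add: FF_def)
      have "ennreal ((1 + DD U i a) * (a + AA U j a)) = ennreal (1 + DD U i a) * ennreal (a + AA U j a)"
        by (rule ennreal_mult[OF n1 n2])
      then show ?thesis using True \<open>measure (mu U j) {..<a} = FF U j a\<close>
        by (simp add: gg_def FF_def)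
    next
      case False
      then show ?thesis by (simp add: gg_def)
    qed
  qed
  also have "\<dots> = ennreal (1/2 + Q)"
  proof (rule nn_integral_has_integral_lebesgue[OF _ Q])
    fix x :: real assume "x \<in> {0..1}"
    then show "0 \<le> (1 + DD U i x) * (x + AA U j x)"
      using DD_lower[of U i x] F_nonneg[of x U j] by (auto simp: FF_def intro!: mult_nonneg_nonneg)
  qed
  finally have "emeasure (mu U i \<Otimes>\<^sub>M mu U j) {p. snd p < fst p} = ennreal (1/2 + Q)" .
  moreover have "0 \<le> 1/2 + Q" 
  proof -
    have "0 \<le> emeasure (mu U i \<Otimes>\<^sub>M mu U j) {p. snd p < fst p}" by simp
    show ?thesis
    proof (rule ccontr)
      assume "\<not> 0 \<le> 1/2 + Q"
      then have "ennreal (1/2 + Q) = 0" by (simp add: ennreal_eq_0_iff)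
      have "(0::real) \<le> 1/2 + Q" using has_integral_nonneg[OF Q nonneg] by blast
      then show False using \<open>\<not> 0 \<le> 1/2 + Q\<close> by simp
    qed
  qed
  ultimately have "measure (mu U i \<Otimes>\<^sub>M mu U j) {p. snd p < fst p} = 1/2 + Q"
    by (simp add: measure_def)
  then show ?thesis using QU by simp
qed

theorem theorem5p13:
  fixes U :: "(nat \<times> nat) set"
  assumes "universal_tournament (UNIV :: nat set) U"
  shows "\<exists>(M :: (nat \<Rightarrow> real) measure) (X :: nat \<Rightarrow> (nat \<Rightarrow> real) \<Rightarrow> real).
           prob_space M \<and>
           prob_space.indep_vars M (\<lambda>_. borel) X UNIV \<and>
           (\<forall>i. continuous_rv_01 M (X i)) \<and>
           (\<forall>i. integral\<^sup>L M (X i) = 1/2) \<and>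
           (\<forall>i j. measure M {\<omega> \<in> space M. X i \<omega> > X j \<omega>} > 1/2 \<longleftrightarrow> (i, j) \<in> U)"
proof -
  from assms have T: "tournament UNIV U" unfolding universal_tournament_def by blast
  define M where "M = PiM UNIV (mu U)"
  define X where "X = (\<lambda>i (\<omega>::nat \<Rightarrow> real). \<omega> i)"
  have P: "prob_space M" unfolding M_def by (intro prob_space_PiM mu_prob)
  interpret prob_space M by (rule P)
  have meas: "X i \<in> measurable M (mu U i)" for i
    unfolding X_def M_def by (rule measurable_component_singleton) auto
  have measb: "X i \<in> borel_measurable M" for i
  proof -
    have "measurable M (mu U i) = measurable M borel" by (rule measurable_cong_sets) auto
    then show ?thesis using meas[of i] by simp
  qed
  have distr: "distr M (mu U i) (X i) = mu U i" for i
    unfolding M_def X_def by (rule distr_PiM_component) (auto intro: mu_prob)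
  have distrb: "distr M borel (X i) = mu U i" for i
  proof -
    have "distr M borel (X i) = distr M (mu U i) (X i)" by (rule distr_cong) auto
    then show ?thesis using distr by simp
  qed
  have indep: "indep_vars (\<lambda>_. borel) X UNIV"
  proof (subst indep_vars_iff_distr_eq_PiM')
    show "UNIV \<noteq> {}" by simp
    show "random_variable borel (X i)" for i using measb by simp
    have e1: "(\<lambda>x. \<lambda>i\<in>UNIV. X i x) = (\<lambda>x. x)" by (auto simp: X_def fun_eq_iff)
    have "distr M (PiM UNIV (\<lambda>_. borel)) (\<lambda>x. x) = distr M M (\<lambda>x. x)"
      by (rule distr_cong) (auto simp: M_def intro!: sets_PiM_cong)
    also have "\<dots> = M" by simp
    also have "PiM UNIV (\<lambda>i. distr M borel (X i)) = PiM UNIV (mu U)" by (simp only: distrb)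
    then have "M = PiM UNIV (\<lambda>i. distr M borel (X i))" unfolding M_def by simp
    finally show "distr M (PiM UNIV (\<lambda>_. borel)) (\<lambda>x. \<lambda>i\<in>UNIV. X i x) = PiM UNIV (\<lambda>i. distr M borel (X i))"
      unfolding e1 .
  qed
  have dfun: "distr_fun M (X i) x = FF U i x" if "0 \<le> x" "x \<le> 1" for i x
  proof -
    have "distr_fun M (X i) x = measure M (X i -` {..x} \<inter> space M)"
      unfolding distr_fun_def by (rule arg_cong[where f="measure M"]) auto
    also have "\<dots> = measure (distr M (mu U i) (X i)) {..x}"
      by (rule measure_distr[OF meas, symmetric]) auto
    also have "\<dots> = measure (mu U i) {..x}" by (simp add: distr)
    also have "\<dots> = FF U i x"
      using emeasure_mu_le[OF that, of U i] F_nonneg[OF that(1), of U i] by (simp add: measure_def)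
    finally show ?thesis .
  qed
  have cont: "continuous_rv_01 M (X i)" for i
    unfolding continuous_rv_01_def
  proof (intro conjI)
    show "X i \<in> borel_measurable M" by (rule measb)
    show "continuous_on {0..1} (distr_fun M (X i))"
      using F_cont[of "{0..1}" U i] by (rule continuous_on_eq) (auto simp: dfun)
    show "strict_mono_on {0..1} (distr_fun M (X i))"
    proof (rule strict_mono_onI)
      fix r s :: real assume "r \<in> {0..1}" "s \<in> {0..1}" "r < s"
      moreover have "FF U i r < FF U i s"
      proof -
        have "FF U i r < FF U i r + (s - r) / 2" using \<open>r < s\<close> by simp
        also have "\<dots> \<le> FF U i s" using F_mono[of r s U i, OF less_imp_le[OF \<open>r < s\<close>]] .
        finally show ?thesis .
      qed
      ultimately show "distr_fun M (X i) r < distr_fun M (X i) s"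
        by (simp add: dfun)
    qed
    show "distr_fun M (X i) 0 = 0" using dfun[of 0 i] F0[of U i] by simp
    show "distr_fun M (X i) 1 = 1" using dfun[of 1 i] F1[of U i] by simp
  qed
  have mean: "integral\<^sup>L M (X i) = 1/2" for i
  proof -
    have "integral\<^sup>L M (X i) = integral\<^sup>L (distr M (mu U i) (X i)) (\<lambda>x. x)"
    proof (rule integral_distr[OF meas, symmetric])
      have "measurable (mu U i) borel = measurable borel (borel :: real measure)"
        by (rule measurable_cong_sets) auto
      then show "(\<lambda>x::real. x) \<in> borel_measurable (mu U i)" by simp
    qed
    then show ?thesis using mean_mu[of U i] by (simp add: distr)
  qed
  have prob: "measure M {\<omega> \<in> space M. X i \<omega> > X j \<omega>} > 1/2 \<longleftrightarrow> (i, j) \<in> U" for i j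
  proof (cases "i = j")
    case True
    have "(i, i) \<notin> U" using T unfolding tournament_def by blast
    then show ?thesis using True by simp
  next
    case False
    have "indep_var borel ((\<lambda>f. f i) \<circ> (\<lambda>\<omega>. restrict (\<lambda>k. X k \<omega>) {i}))
        borel ((\<lambda>f. f j) \<circ> (\<lambda>\<omega>. restrict (\<lambda>k. X k \<omega>) {j}))"
      using False by (intro indep_var_compose[OF indep_var_restrict[OF indep]]) auto
    also have "(\<lambda>f. f i) \<circ> (\<lambda>\<omega>. restrict (\<lambda>k. X k \<omega>) {i}) = X i" by (auto simp: fun_eq_iff)
    also have "(\<lambda>f. f j) \<circ> (\<lambda>\<omega>. restrict (\<lambda>k. X k \<omega>) {j}) = X j" by (auto simp: fun_eq_iff)
    finally have iv: "indep_var borel (X i) borel (X j)" .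
    then have deq: "distr M borel (X i) \<Otimes>\<^sub>M distr M borel (X j) = distr M (borel \<Otimes>\<^sub>M borel) (\<lambda>x. (X i x, X j x))"
      by (simp add: indep_var_distribution_eq)
    have S: "{p. snd p < fst p} \<in> sets (borel \<Otimes>\<^sub>M borel :: (real \<times> real) measure)"
    proof -
      have "{p \<in> space (borel \<Otimes>\<^sub>M borel). snd p < (fst p::real)} \<in> sets (borel \<Otimes>\<^sub>M borel)"
        by measurable
      then show ?thesis by (simp add: space_pair_measure)
    qed
    have "measure M {\<omega> \<in> space M. X i \<omega> > X j \<omega>} = measure M ((\<lambda>x. (X i x, X j x)) -` {p. snd p < fst p} \<inter> space M)"
      by (rule arg_cong[where f="measure M"]) auto
    also have "\<dots> = measure (distr M (borel \<Otimes>\<^sub>M borel) (\<lambda>x. (X i x, X j x))) {p. snd p < fst p}"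
      by (rule measure_distr[symmetric]) (use measb S in auto)
    also have "\<dots> = measure (mu U i \<Otimes>\<^sub>M mu U j) {p. snd p < fst p}"
      unfolding deq[symmetric] distrb ..
    finally show ?thesis using pair_mu[OF T False] by simp
  qed
  show ?thesis
    by (rule exI[of _ M], rule exI[of _ X]) (use P indep cont mean prob in auto)
qed

end
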